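(* Let $\mathbb{K}$ be a field of characteristic not $2$ and $n\geq 3$. Let $\mathcal{V}$ be a linear subspace of $M_n(\mathbb{K})$ in which every matrix has at most two distinct eigenvalues in $\mathbb{K}$. If $A,B\in\mathcal{V}$ satisfy $\operatorname{rk}A\leq 1$, $\operatorname{rk}B\leq 1$ and $\operatorname{tr}A=\operatorname{tr}B=0$, then $\operatorname{tr}(AB)=0$. *)

theory Defs
  imports "Jordan_Normal_Form.DL_Rank" "Jordan_Normal_Form.Char_Poly"
begin

definition mat_trace :: "'a :: comm_ring_1 mat \<Rightarrow> 'a" where
  "mat_trace A = (\<Sum>i<dim_row A. A $$ (i, i))"

definition mat_subspace :: "nat \<Rightarrow> 'a :: field mat set \<Rightarrow> bool" where
  "mat_subspace n V \<longleftrightarrow> V \<subseteq> carrier_mat n n \<and> 0\<^sub>m n n \<in> V \<and>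
     (\<forall>A\<in>V. \<forall>B\<in>V. A + B \<in> V) \<and> (\<forall>c. \<forall>A\<in>V. c \<cdot>\<^sub>m A \<in> V)"

definition at_most_two_eigenvalues :: "'a :: field mat \<Rightarrow> bool" where
  "at_most_two_eigenvalues M \<longleftrightarrow>
     (\<forall>a b c. eigenvalue M a \<and> eigenvalue M b \<and> eigenvalue M c \<longrightarrow> a = b \<or> a = c \<or> b = c)"

end

theory Submission
  imports Defs
begin

lemma minor_aux:
  fixes x y a b c d :: "'a::field"
  assumes e1: "x*a + y*b = 0" and e2: "x*c + y*d = 0" and nz: "x \<noteq> 0 \<or> y \<noteq> 0"
  shows "a*d = b*c"
proof -
  have "x*(a*d - b*c) = d*(x*a+y*b) - b*(x*c+y*d)" by (simp add: algebra_simps)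
  also have "\<dots> = 0" using e1 e2 by simp
  finally have 1: "x*(a*d - b*c) = 0" .
  have "y*(a*d - b*c) = a*(x*c+y*d) - c*(x*a+y*b)" by (simp add: algebra_simps)
  also have "\<dots> = 0" using e1 e2 by simp
  finally have 2: "y*(a*d - b*c) = 0" .
  from 1 2 nz show ?thesis by auto
qed

lemma (in vec_space) rank1_minors:
  assumes A: "A \<in> carrier_mat n nc" and r: "rank A \<le> 1"
    and j: "j < nc" and k: "k < nc" and p: "p < n" and q: "q < n"
  shows "A $$ (p,j) * A $$ (q,k) = A $$ (p,k) * A $$ (q,j)"
proof (cases "col A j = col A k")
  case True
  have "A $$ (p,j) = A $$ (p,k)" "A $$ (q,j) = A $$ (q,k)"
    using arg_cong[OF True, of "\<lambda>v. v $ p"] arg_cong[OF True, of "\<lambda>v. v $ q"] A j k p q by auto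
  then show ?thesis by (simp add: mult.commute)
next
  case False
  define C where "C = mat_of_cols n [col A j, col A k]"
  have cj: "col A j \<in> carrier_vec n" and ck: "col A k \<in> carrier_vec n" using A j k by auto
  have C: "C \<in> carrier_mat n 2" unfolding C_def using mat_of_cols_carrier(1)[of n "[col A j, col A k]"] by (simp add: numeral_2_eq_2)
  have colsC: "cols C = [col A j, col A k]" unfolding C_def using cj ck by (intro cols_mat_of_cols) auto
  have dist: "distinct (cols C)" using colsC False by simp
  show ?thesis
  proof (cases "lin_dep (set (cols C))")
    case True
    obtain v where v: "v \<in> carrier_vec 2" "v \<noteq> 0\<^sub>v 2" "C *\<^sub>v v = 0\<^sub>v n"
      using lin_depE[OF C True dist] by blast
    have ent: "(C *\<^sub>v v) $ x = v $ 0 * A $$ (x,j) + v $ 1 * A $$ (x,k)" if x: "x < n" for x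
    proof -
      have "(C *\<^sub>v v) $ x = (\<Sum>i<2. C $$ (x,i) * v $ i)"
        using C v(1) x by (simp add: scalar_prod_def lessThan_atLeast0)
      also have "\<dots> = C $$ (x,0) * v $ 0 + C $$ (x,1) * v $ 1" by (simp add: numeral_2_eq_2)
      also have "\<dots> = v $ 0 * A $$ (x,j) + v $ 1 * A $$ (x,k)"
        unfolding C_def using x A j k by (simp add: mat_of_cols_index mult.commute)
      finally show ?thesis .
    qed
    have e1: "v $ 0 * A $$ (p,j) + v $ 1 * A $$ (p,k) = 0" using ent[OF p] v(3) p by simp
    have e2: "v $ 0 * A $$ (q,j) + v $ 1 * A $$ (q,k) = 0" using ent[OF q] v(3) q by simp
    have nz: "v $ 0 \<noteq> 0 \<or> v $ 1 \<noteq> 0"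
    proof (rule ccontr)
      assume "\<not> ?thesis"
      then have "v = 0\<^sub>v 2" using v(1) by (intro eq_vecI) (auto simp: less_2_cases_iff)
      with v(2) show False by simp
    qed
    show ?thesis using minor_aux[OF e1 e2 nz] .
  next
    case False
    have sub: "set (cols C) \<subseteq> set (cols A)" using colsC A j k by (auto simp: cols_def)
    have "card (set (cols C)) \<le> rank A"
      using rank_ge_card_indpt[OF A sub False] .
    moreover have "card (set (cols C)) = 2" using colsC dist by (simp add: distinct_card[OF dist, unfolded colsC])
    ultimately show ?thesis using r by simp
  qed
qed

lemma rank1_decomp:
  fixes A :: "'a::field mat"
  assumes A: "A \<in> carrier_mat n n" and r: "vec_space.rank n A \<le> 1"
  shows "\<exists>a b. a \<in> carrier_vec n \<and> b \<in> carrier_vec n \<and> (\<forall>i<n. \<forall>j<n. A $$ (i,j) = a$i * b$j)"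
proof (cases "\<forall>i<n. \<forall>j<n. A$$(i,j) = 0")
  case True
  then show ?thesis by (intro exI[of _ "0\<^sub>v n"]) auto
next
  case False
  then obtain p j0 where p: "p < n" and j0: "j0 < n" and nz: "A $$ (p,j0) \<noteq> 0" by auto
  interpret vec_space "TYPE('a)" n .
  define a where "a = vec n (\<lambda>i. A $$ (i,j0))"
  define b where "b = vec n (\<lambda>k. A $$ (p,k) / A $$ (p,j0))"
  have "\<forall>i<n. \<forall>j<n. A $$ (i,j) = a$i * b$j"
  proof (intro allI impI)
    fix i j assume i: "i < n" and j: "j < n"
    have m: "A $$ (p,j0) * A $$ (i,j) = A $$ (p,j) * A $$ (i,j0)"
      using rank1_minors[OF A r j0 j p i] .
    show "A $$ (i,j) = a$i * b$j" unfolding a_def b_def using i j nz m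
      by (simp add: field_simps)
  qed
  then show ?thesis unfolding a_def b_def by (intro exI[of _ a] exI[of _ b]) (auto simp: a_def b_def)
qed

lemma mult_vec_rank2:
  fixes M :: "'a::field mat"
  assumes M: "M \<in> carrier_mat n n"
    and ent: "\<forall>i<n. \<forall>j<n. M$$(i,j) = a$i*b$j + t*(c$i*d$j)"
    and v: "v \<in> carrier_vec n" and i: "i < n"
  shows "(M *\<^sub>v v)$i = a$i * (\<Sum>j<n. b$j*v$j) + t*c$i*(\<Sum>j<n. d$j*v$j)"
proof -
  have "(M *\<^sub>v v)$i = (\<Sum>j<n. M$$(i,j) * v$j)"
    using M v i by (simp add: scalar_prod_def lessThan_atLeast0)
  also have "\<dots> = (\<Sum>j<n. a$i * (b$j*v$j) + t*c$i*(d$j*v$j))"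
    using ent i by (intro sum.cong) (auto simp: algebra_simps)
  also have "\<dots> = a$i * (\<Sum>j<n. b$j*v$j) + t*c$i*(\<Sum>j<n. d$j*v$j)"
    by (simp add: sum.distrib sum_distrib_left)
  finally show ?thesis .
qed

theorem mainTheorem10:
  fixes V :: "'a :: field mat set" and n :: nat and A B :: "'a mat"
  assumes "CHAR('a) \<noteq> 2"
    and "n \<ge> 3"
    and "mat_subspace n V"
    and "\<forall>M\<in>V. at_most_two_eigenvalues M"
    and "A \<in> V" and "B \<in> V"
    and "vec_space.rank n A \<le> 1" and "vec_space.rank n B \<le> 1"
    and "mat_trace A = 0" and "mat_trace B = 0"
  shows "mat_trace (A * B) = 0"
proof (rule ccontr)
  assume ntr: "mat_trace (A * B) \<noteq> 0"
  note ch = assms(1) and n3 = assms(2) and sub = assms(3)[unfolded mat_subspace_def]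
  have Ac: "A \<in> carrier_mat n n" and Bc: "B \<in> carrier_mat n n" using sub assms(5,6) by auto
  obtain a b where a: "a \<in> carrier_vec n" and b: "b \<in> carrier_vec n"
    and Ae: "\<forall>i<n. \<forall>j<n. A $$ (i,j) = a$i * b$j" using rank1_decomp[OF Ac assms(7)] by blast
  obtain c d where c: "c \<in> carrier_vec n" and d: "d \<in> carrier_vec n"
    and Be: "\<forall>i<n. \<forall>j<n. B $$ (i,j) = c$i * d$j" using rank1_decomp[OF Bc assms(8)] by blast
  define \<beta> where "\<beta> = (\<Sum>k<n. b$k * c$k)"
  define \<delta> where "\<delta> = (\<Sum>k<n. d$k * a$k)"
  have trA: "(\<Sum>k<n. b$k * a$k) = 0"
  proof -
    have "mat_trace A = (\<Sum>k<n. b$k * a$k)" unfolding mat_trace_def using Ac Ae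
      by (auto intro!: sum.cong simp: mult.commute)
    then show ?thesis using assms(9) by simp
  qed
  have trB: "(\<Sum>k<n. d$k * c$k) = 0"
  proof -
    have "mat_trace B = (\<Sum>k<n. d$k * c$k)" unfolding mat_trace_def using Bc Be
      by (auto intro!: sum.cong simp: mult.commute)
    then show ?thesis using assms(10) by simp
  qed
  have trAB: "mat_trace (A * B) = \<beta> * \<delta>"
  proof -
    have "mat_trace (A * B) = (\<Sum>i<n. \<Sum>k<n. A$$(i,k) * B$$(k,i))"
      unfolding mat_trace_def using Ac Bc
      by (auto intro!: sum.cong simp: scalar_prod_def lessThan_atLeast0)
    also have "\<dots> = (\<Sum>i<n. \<Sum>k<n. (b$k * c$k) * (d$i * a$i))"
      using Ae Be by (auto intro!: sum.cong simp: algebra_simps)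
    also have "\<dots> = \<beta> * \<delta>" unfolding \<beta>_def \<delta>_def
      by (simp add: sum_product sum_distrib_left sum_distrib_right)
    finally show ?thesis .
  qed
  have bd: "\<beta> * \<delta> \<noteq> 0" using ntr trAB by simp
  define t where "t = inverse (\<beta> * \<delta>)"
  have tbd: "t * (\<beta> * \<delta>) = 1" unfolding t_def using bd by (rule field_class.field_inverse)
  define M where "M = A + t \<cdot>\<^sub>m B"
  have MV: "M \<in> V" unfolding M_def using sub assms(5,6) by blast
  have Mc: "M \<in> carrier_mat n n" unfolding M_def using Ac Bc by simp
  have Me: "\<forall>i<n. \<forall>j<n. M$$(i,j) = a$i*b$j + t*(c$i*d$j)"
    unfolding M_def using Ac Bc Ae Be by simp
  have two: "at_most_two_eigenvalues M" using assms(4) MV by blast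
  have ev1: "eigenvalue M 1"
  proof -
    define u where "u = vec n (\<lambda>i. \<beta> * a$i + c$i)"
    have u: "u \<in> carrier_vec n" unfolding u_def by simp
    have sb: "(\<Sum>j<n. b$j*u$j) = \<beta>"
    proof -
      have "(\<Sum>j<n. b$j*u$j) = (\<Sum>j<n. \<beta> * (b$j*a$j) + b$j*c$j)"
        unfolding u_def by (intro sum.cong) (auto simp: algebra_simps)
      also have "\<dots> = \<beta>" using trA by (simp add: sum.distrib sum_distrib_left[symmetric] \<beta>_def)
      finally show ?thesis .
    qed
    have sd: "(\<Sum>j<n. d$j*u$j) = \<beta> * \<delta>"
    proof -
      have "(\<Sum>j<n. d$j*u$j) = (\<Sum>j<n. \<beta> * (d$j*a$j) + d$j*c$j)"
        unfolding u_def by (intro sum.cong) (auto simp: algebra_simps)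
      also have "\<dots> = \<beta> * \<delta>" using trB by (simp add: sum.distrib sum_distrib_left[symmetric] \<delta>_def)
      finally show ?thesis .
    qed
    have "M *\<^sub>v u = 1 \<cdot>\<^sub>v u"
    proof (rule eq_vecI)
      fix i assume "i < dim_vec (1 \<cdot>\<^sub>v u)"
      then have i: "i < n" using u by simp
      show "(M *\<^sub>v u) $ i = (1 \<cdot>\<^sub>v u) $ i"
      proof -
        have "(M *\<^sub>v u) $ i = a$i*\<beta> + t*c$i*(\<beta>*\<delta>)" using mult_vec_rank2[OF Mc Me u i] sb sd by simp
        also have "\<dots> = \<beta> * a$i + c$i * (t*(\<beta>*\<delta>))" by (simp add: algebra_simps)
        also have "\<dots> = \<beta> * a$i + c$i" using tbd by simp
        finally have X: "(M *\<^sub>v u) $ i = \<beta> * a$i + c$i" .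
        have "(1 \<cdot>\<^sub>v u) $ i = \<beta> * a$i + c$i" using i unfolding u_def by simp
        with X show ?thesis by simp
      qed
    qed (use Mc u in simp)
    moreover have "u \<noteq> 0\<^sub>v n" using sd bd by auto
    ultimately show ?thesis unfolding eigenvalue_def eigenvector_def using u Mc by auto
  qed
  have ev2: "eigenvalue M (-1)"
  proof -
    define u where "u = vec n (\<lambda>i. \<beta> * a$i - c$i)"
    have u: "u \<in> carrier_vec n" unfolding u_def by simp
    have sb: "(\<Sum>j<n. b$j*u$j) = - \<beta>"
    proof -
      have "(\<Sum>j<n. b$j*u$j) = (\<Sum>j<n. \<beta> * (b$j*a$j) - b$j*c$j)"
        unfolding u_def by (intro sum.cong) (auto simp: algebra_simps)
      also have "\<dots> = - \<beta>" using trA by (simp add: sum_subtractf sum_distrib_left[symmetric] \<beta>_def)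
      finally show ?thesis .
    qed
    have sd: "(\<Sum>j<n. d$j*u$j) = \<beta> * \<delta>"
    proof -
      have "(\<Sum>j<n. d$j*u$j) = (\<Sum>j<n. \<beta> * (d$j*a$j) - d$j*c$j)"
        unfolding u_def by (intro sum.cong) (auto simp: algebra_simps)
      also have "\<dots> = \<beta> * \<delta>" using trB by (simp add: sum_subtractf sum_distrib_left[symmetric] \<delta>_def)
      finally show ?thesis .
    qed
    have "M *\<^sub>v u = (-1) \<cdot>\<^sub>v u"
    proof (rule eq_vecI)
      fix i assume "i < dim_vec ((-1) \<cdot>\<^sub>v u)"
      then have i: "i < n" using u by simp
      show "(M *\<^sub>v u) $ i = ((-1) \<cdot>\<^sub>v u) $ i"
      proof -
        have "(M *\<^sub>v u) $ i = a$i*(-\<beta>) + t*c$i*(\<beta>*\<delta>)" using mult_vec_rank2[OF Mc Me u i] sb sd by simp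
        also have "\<dots> = -(\<beta> * a$i) + c$i * (t*(\<beta>*\<delta>))" by (simp add: algebra_simps)
        also have "\<dots> = -(\<beta> * a$i - c$i)" using tbd by simp
        finally have X: "(M *\<^sub>v u) $ i = -(\<beta> * a$i - c$i)" .
        have "((-1) \<cdot>\<^sub>v u) $ i = -(\<beta> * a$i - c$i)" using i unfolding u_def by simp
        with X show ?thesis by simp
      qed
    qed (use Mc u in simp)
    moreover have "u \<noteq> 0\<^sub>v n" using sd bd by auto
    ultimately show ?thesis unfolding eigenvalue_def eigenvector_def using u Mc by auto
  qed
  have ev0: "eigenvalue M 0"
  proof -
    define Q where "Q = mat n n (\<lambda>(i,j). if i = 0 then b$j else if i = 1 then d$j else (0::'a))"
    have Qc: "Q \<in> carrier_mat n n" unfolding Q_def by simp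
    have "Q = mat\<^sub>r n n (\<lambda>i. if i = 2 then 0\<^sub>v n else row Q i)"
      by (rule eq_matI) (auto simp: Q_def)
    then have "det Q = 0" using det_row_0[of 2 n "\<lambda>i. row Q i"] n3 Qc by auto
    then obtain v where v: "v \<in> carrier_vec n" "v \<noteq> 0\<^sub>v n" "Q *\<^sub>v v = 0\<^sub>v n"
      using det_0_iff_vec_prod_zero_field[OF Qc] by blast
    have "(Q *\<^sub>v v) $ 0 = (\<Sum>j<n. b$j*v$j)"
      using n3 v(1) by (simp add: Q_def scalar_prod_def lessThan_atLeast0)
    then have s1: "(\<Sum>j<n. b$j*v$j) = 0" using v(3) n3 by simp
    have "(Q *\<^sub>v v) $ 1 = (\<Sum>j<n. d$j*v$j)"
      using n3 v(1) by (simp add: Q_def scalar_prod_def lessThan_atLeast0)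
    then have s2: "(\<Sum>j<n. d$j*v$j) = 0" using v(3) n3 by simp
    have "M *\<^sub>v v = 0 \<cdot>\<^sub>v v"
    proof (rule eq_vecI)
      fix i assume "i < dim_vec (0 \<cdot>\<^sub>v v)"
      then have i: "i < n" using v by simp
      show "(M *\<^sub>v v) $ i = (0 \<cdot>\<^sub>v v) $ i"
        using mult_vec_rank2[OF Mc Me v(1) i] s1 s2 i v(1) by simp
    qed (use Mc v in simp)
    then show ?thesis unfolding eigenvalue_def eigenvector_def using v Mc by auto
  qed
  have "(1::'a) \<noteq> -1"
  proof
    assume h: "(1::'a) = -1"
    have "(1::'a) + 1 = 1 + -1" using h by (rule arg_cong)
    then have h2: "(1::'a) + 1 = 0" by (simp only: add.right_inverse)
    have "of_nat 2 = (1::'a) + 1" by simp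
    then have "of_nat 2 = (0::'a)" using h2 by (simp only:)
    then have dv: "CHAR('a) dvd 2" by (simp only: of_nat_eq_0_iff_char_dvd)
    then have "CHAR('a) \<le> 2" by (rule dvd_imp_le) simp
    moreover have "CHAR('a) \<noteq> 0" using dv by (metis dvd_0_left_iff zero_neq_numeral)
    moreover have "CHAR('a) \<noteq> Suc 0" by (rule CHAR_not_1)
    ultimately show False using ch by linarith
  qed
  then show False using two ev0 ev1 ev2 unfolding at_most_two_eigenvalues_def by force
qed

end
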